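(* For every integer $n \geq 4$, the graph $G_n$ has chromatic number $n-2$ and is edge-critical, i.e., $\chi(G_n - e) < \chi(G_n)$ for every edge $e$ of $G_n$.
   Context: Let $[n]=\{1,\dots,n\}$. A $2$-subset $\{a,b\}$ of $[n]$ with $a<b$ is called stable if $b \neq a+1$ and $\{a,b\}\neq\{1,n\}$; it is written $ab$. For $n\ge 4$, the graph $G_n$ has as vertex set all stable $2$-subsets of $[n]$. Two vertices $ab$ ($a<b$) and $cd$ ($c<d$) with $a<c$ are adjacent in $G_n$ if and only if $\{a,b\}\cap\{c,d\}=\emptyset$ and one of the following holds: $a<c<b<d$ (a crossing pair), or $1<a<c<d<b$ (a transverse pair). $\chi$ denotes chromatic number. *)

theory Defs
  imports Main
begin

record 'v sgraph =
  verts :: "'v set"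
  edges :: "'v set set"

definition proper_colouring :: "'v sgraph \<Rightarrow> nat \<Rightarrow> ('v \<Rightarrow> nat) \<Rightarrow> bool" where
  "proper_colouring G k c \<longleftrightarrow>
     (\<forall>v\<in>verts G. c v < k) \<and> (\<forall>u\<in>verts G. \<forall>v\<in>verts G. {u, v} \<in> edges G \<longrightarrow> c u \<noteq> c v)"

definition colourable :: "'v sgraph \<Rightarrow> nat \<Rightarrow> bool" where
  "colourable G k \<longleftrightarrow> (\<exists>c. proper_colouring G k c)"

definition chromatic_number :: "'v sgraph \<Rightarrow> nat" where
  "chromatic_number G = (LEAST k. colourable G k)"

definition delete_edge :: "'v sgraph \<Rightarrow> 'v set \<Rightarrow> 'v sgraph" where
  "delete_edge G e = \<lparr>verts = verts G, edges = edges G - {e}\<rparr>"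

text \<open>Stable 2-subsets of [n], represented as pairs (a,b) with a < b.\<close>

definition stable :: "nat \<Rightarrow> nat \<times> nat \<Rightarrow> bool" where
  "stable n p \<longleftrightarrow> (case p of (a, b) \<Rightarrow>
     1 \<le> a \<and> a < b \<and> b \<le> n \<and> b \<noteq> a + 1 \<and> \<not> (a = 1 \<and> b = n))"

definition adj_ordered :: "nat \<times> nat \<Rightarrow> nat \<times> nat \<Rightarrow> bool" where
  "adj_ordered p q \<longleftrightarrow> (case p of (a, b) \<Rightarrow> case q of (c, d) \<Rightarrow>
     a < c \<and> {a, b} \<inter> {c, d} = {} \<and> ((a < c \<and> c < b \<and> b < d) \<or> (1 < a \<and> a < c \<and> c < d \<and> d < b)))"

definition G :: "nat \<Rightarrow> (nat \<times> nat) sgraph" where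
  "G n = \<lparr>verts = {p. stable n p},
          edges = {{p, q} | p q. stable n p \<and> stable n q \<and> adj_ordered p q}\<rparr>"

end

theory Submission
  imports Defs
begin

lemma stable_pair: "stable n (a,b) \<longleftrightarrow> 1 \<le> a \<and> a < b \<and> b \<le> n \<and> b \<noteq> a + 1 \<and> \<not> (a = 1 \<and> b = n)"
  by (simp add: stable_def)

lemma adj_pair: "adj_ordered (a,b) (c,d) \<longleftrightarrow> a < c \<and> {a, b} \<inter> {c, d} = {} \<and> ((a < c \<and> c < b \<and> b < d) \<or> (1 < a \<and> a < c \<and> c < d \<and> d < b))"
  by (simp add: adj_ordered_def)

lemma E_G: "edges (G n) = {{p, q} |p q. stable n p \<and> stable n q \<and> adj_ordered p q}"
  unfolding G_def by simp

lemma V_G: "verts (G n) = {p. stable n p}"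
  unfolding G_def by simp

lemma edges_G: "{u,v} \<in> edges (G n) \<longleftrightarrow> stable n u \<and> stable n v \<and> (adj_ordered u v \<or> adj_ordered v u)"
proof
  assume "{u,v} \<in> edges (G n)"
  then obtain p q where "{u,v} = {p,q}" "stable n p" "stable n q" "adj_ordered p q"
    unfolding E_G by blast
  then show "stable n u \<and> stable n v \<and> (adj_ordered u v \<or> adj_ordered v u)"
    by (auto simp: doubleton_eq_iff)
next
  assume a: "stable n u \<and> stable n v \<and> (adj_ordered u v \<or> adj_ordered v u)"
  have "{u,v} = {v,u}" by (rule insert_commute)
  then show "{u,v} \<in> edges (G n)"
    unfolding E_G using a by blast
qed

lemma proper_G_adj:
  assumes "proper_colouring (G n) k c" "stable n u" "stable n v" "adj_ordered u v"
  shows "c u \<noteq> c v"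
proof -
  have "{u,v} \<in> edges (G n)" using assms(2-4) edges_G by blast
  then show ?thesis using assms(1-3) unfolding proper_colouring_def V_G by blast
qed

lemma proper_G_bnd:
  assumes "proper_colouring (G n) k c" "stable n u"
  shows "c u < k"
  using assms unfolding proper_colouring_def V_G by blast

lemma colourable_G_intro:
  assumes "\<And>v. stable n v \<Longrightarrow> c v < k"
    "\<And>u v. stable n u \<Longrightarrow> stable n v \<Longrightarrow> adj_ordered u v \<Longrightarrow> c u \<noteq> c v"
  shows "colourable (G n) k"
  unfolding colourable_def proper_colouring_def V_G
  apply (rule exI[of _ c])
  using assms edges_G[of _ _ n] by (metis mem_Collect_eq)

lemma upper: "colourable (G n) (n - 2)"
proof (rule colourable_G_intro[of n "\<lambda>(a,b). a - 1"])
  fix v assume "stable n v" then show "(case v of (a,b) \<Rightarrow> a - 1) < n - 2"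
    by (cases v) (auto simp: stable_def)
next
  fix u v assume "stable n u" "stable n v" "adj_ordered u v"
  then show "(case u of (a,b) \<Rightarrow> a - 1) \<noteq> (case v of (a,b) \<Rightarrow> a - 1)"
    by (cases u; cases v) (auto simp: stable_def adj_ordered_def)
qed

lemma base4: "colourable (G 4) k \<Longrightarrow> 2 \<le> k"
proof -
  assume "colourable (G 4) k"
  then obtain c where c: "proper_colouring (G 4) k c" by (auto simp: colourable_def)
  have s1: "stable 4 (1,3)" and s2: "stable 4 (2,4)" by (auto simp: stable_def)
  have "adj_ordered (1,3) (2,4)" by (simp add: adj_ordered_def)
  then have "c (1,3) \<noteq> c (2,4)" using proper_G_adj[OF c s1 s2] by blast
  moreover have "c (1,3) < k" "c (2,4) < k" using proper_G_bnd[OF c] s1 s2 by auto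
  ultimately show ?thesis by linarith
qed

lemma xadj: "2 \<le> j \<Longrightarrow> b' < n \<Longrightarrow> a' < b' \<Longrightarrow> a' \<noteq> j \<Longrightarrow> j < b' \<Longrightarrow>
   adj_ordered (a',b') (j,n) \<or> adj_ordered (j,n) (a',b')"
  by (cases "a' < j") (auto simp: adj_ordered_def)

lemma step:
  assumes n5: "5 \<le> n" and cp: "proper_colouring (G n) k c"
  shows "colourable (G (n-1)) (k-1)"
proof -
  have col: "\<And>u v. stable n u \<Longrightarrow> stable n v \<Longrightarrow> adj_ordered u v \<or> adj_ordered v u \<Longrightarrow> c u \<noteq> c v"
    using proper_G_adj[OF cp] by metis
  have bnd: "\<And>v. stable n v \<Longrightarrow> c v < k" using proper_G_bnd[OF cp] by blast
  define \<alpha> where "\<alpha> = c (1, n-1)"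
  define s where "s = (\<lambda>(a::nat,b::nat). if 2 \<le> a then a else b)"
  define t where "t = (\<lambda>v. if c v = \<alpha> then c (s v, n) else c v)"
  define c' where "c' = (\<lambda>v. if t v < \<alpha> then t v else t v - 1)"
  have w: "stable n (1,n-1)" using n5 by (auto simp: stable_def)
  have x: "\<And>j. 2 \<le> j \<Longrightarrow> j \<le> n-2 \<Longrightarrow> stable n (j,n)" using n5 by (auto simp: stable_def)
  have wx: "\<And>j. 2 \<le> j \<Longrightarrow> j \<le> n-2 \<Longrightarrow> adj_ordered (1,n-1) (j,n)"
    using n5 by (auto simp: adj_ordered_def)
  have mono: "\<And>v. stable (n-1) v \<Longrightarrow> stable n v" by (auto simp: stable_def split: prod.splits)
  have srange: "\<And>v. stable (n-1) v \<Longrightarrow> 2 \<le> s v \<and> s v \<le> n-2"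
    by (auto simp: stable_def s_def split: prod.splits)
  have shadow: "\<And>u v. stable (n-1) u \<Longrightarrow> stable (n-1) v \<Longrightarrow> adj_ordered u v \<or> adj_ordered v u
     \<Longrightarrow> adj_ordered u (s v, n) \<or> adj_ordered (s v, n) u"
  proof -
    fix u v assume su: "stable (n-1) u" and sv: "stable (n-1) v" and a: "adj_ordered u v \<or> adj_ordered v u"
    obtain a' b' where u: "u = (a',b')" by (cases u)
    obtain a b where v: "v = (a,b)" by (cases v)
    have "b' < n" "a' < b'" "a < b" "1 \<le> a'" "1 \<le> a" using su sv u v by (auto simp: stable_def)
    have a2: "adj_ordered (a',b') (a,b) \<or> adj_ordered (a,b) (a',b')" using a u v by auto
    have L1: "a' \<noteq> a \<and> a < b'" using a2 by (auto simp: adj_ordered_def)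
    have L2: "a = 1 \<Longrightarrow> a' \<noteq> b \<and> b < b'" using a2 \<open>1 \<le> a'\<close> by (auto simp: adj_ordered_def)
    have "2 \<le> s v" using srange sv by blast
    moreover have "a' \<noteq> s v \<and> s v < b'" using L1 L2 v \<open>a<b\<close> \<open>1 \<le> a\<close> by (cases "2 \<le> a") (auto simp: s_def)
    ultimately show "adj_ordered u (s v, n) \<or> adj_ordered (s v, n) u"
      using u \<open>b' < n\<close> \<open>a' < b'\<close> xadj by blast
  qed
  have \<alpha>k: "\<alpha> < k" using bnd[OF w] by (simp add: \<alpha>_def)
  have tne: "t v \<noteq> \<alpha> \<and> t v < k" if "stable (n-1) v" for v
  proof (cases "c v = \<alpha>")
    case True
    have "c (s v, n) \<noteq> \<alpha>" unfolding \<alpha>_def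
      using col[OF x w] srange[OF that] wx by metis
    then show ?thesis using True bnd x srange[OF that] by (simp add: t_def)
  next
    case False
    then show ?thesis using bnd mono[OF that] by (simp add: t_def)
  qed
  have tprop: "t u \<noteq> t v" if "stable (n-1) u" "stable (n-1) v" "adj_ordered u v \<or> adj_ordered v u" for u v
  proof -
    have cuv: "c u \<noteq> c v" using col mono that by blast
    show ?thesis
    proof (cases "c u = \<alpha>")
      case True
      then have "c v \<noteq> \<alpha>" using cuv by simp
      moreover have "c v \<noteq> c (s u, n)"
        using col[OF mono[OF that(2)] x] srange[OF that(1)] shadow[OF that(2,1)] that(3) by metis
      ultimately show ?thesis using True by (simp add: t_def)
    next
      case False
      show ?thesis
      proof (cases "c v = \<alpha>")
        case True
        have "c u \<noteq> c (s v, n)"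
          using col[OF mono[OF that(1)] x] srange[OF that(2)] shadow[OF that] by metis
        then show ?thesis using True False by (simp add: t_def)
      next
        case False2: False
        then show ?thesis using False cuv by (simp add: t_def)
      qed
    qed
  qed
  show ?thesis
  proof (rule colourable_G_intro[of "n-1" c'])
    fix v assume "stable (n-1) v"
    then show "c' v < k - 1" using tne[of v] \<alpha>k unfolding c'_def by auto
  next
    fix u v assume "stable (n-1) u" "stable (n-1) v" "adj_ordered u v"
    then show "c' u \<noteq> c' v" using tne[of u] tne[of v] tprop[of u v] unfolding c'_def by auto
  qed
qed

lemma lower: "4 \<le> n \<Longrightarrow> colourable (G n) k \<Longrightarrow> n - 2 \<le> k"
proof (induction n arbitrary: k rule: nat_induct_at_least)
  case base
  then show ?case using base4 by simp
next
  case (Suc n)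
  then obtain c where c: "proper_colouring (G (Suc n)) k c" by (auto simp: colourable_def)
  have "colourable (G n) (k-1)" using step[OF _ c] Suc.hyps by simp
  then have "n - 2 \<le> k - 1" using Suc.IH by blast
  moreover have "k \<noteq> 0"
  proof
    assume "k = 0"
    have "stable (Suc n) (1,3)" using Suc.hyps by (auto simp: stable_def)
    then show False using proper_G_bnd[OF c] \<open>k = 0\<close> by fastforce
  qed
  ultimately show ?case using Suc.hyps by linarith
qed


lemma colourable_del:
  assumes img: "\<And>v. stable n v \<Longrightarrow> col v \<in> S" and fin: "finite S" and cS: "card S \<le> k"
    and pr: "\<And>u v. stable n u \<Longrightarrow> stable n v \<Longrightarrow> adj_ordered u v \<Longrightarrow> {u,v} \<noteq> e \<Longrightarrow> col u \<noteq> col v"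
  shows "colourable (delete_edge (G n) e) k"
proof -
  obtain h where h: "bij_betw h S {0..<card S}" using ex_bij_betw_finite_nat[OF fin] by blast
  have hi: "inj_on h S" using h by (simp add: bij_betw_def)
  have hb: "\<And>x. x \<in> S \<Longrightarrow> h x < card S" using h by (auto simp: bij_betw_def)
  show ?thesis
    unfolding colourable_def proper_colouring_def
  proof (intro exI[of _ "h \<circ> col"] conjI ballI impI)
    fix v assume "v \<in> verts (delete_edge (G n) e)"
    then have "stable n v" by (simp add: delete_edge_def V_G)
    then show "(h \<circ> col) v < k" using hb[OF img[OF \<open>stable n v\<close>]] cS by simp
  next
    fix u v assume u: "u \<in> verts (delete_edge (G n) e)" and v: "v \<in> verts (delete_edge (G n) e)"
      and uv: "{u, v} \<in> edges (delete_edge (G n) e)"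
    have su: "stable n u" and sv: "stable n v" using u v by (auto simp: delete_edge_def V_G)
    have ne: "{u,v} \<noteq> e" and ed: "{u,v} \<in> edges (G n)" using uv by (auto simp: delete_edge_def)
    have "adj_ordered u v \<or> adj_ordered v u" using ed edges_G by blast
    moreover have "{v,u} \<noteq> e" using ne by (simp add: insert_commute)
    ultimately have "col u \<noteq> col v" using pr su sv ne by metis
    then show "(h \<circ> col) u \<noteq> (h \<circ> col) v"
      by (metis hi img su sv inj_on_eq_iff comp_apply)
  qed
qed

definition star_col :: "nat set \<Rightarrow> (nat \<times> nat \<Rightarrow> nat) \<Rightarrow> nat \<times> nat \<Rightarrow> nat" where
  "star_col Q sp = (\<lambda>(x,y). if x \<notin> Q then x else if y \<notin> Q then y else sp (x,y))"

lemma star_ok: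
  assumes inner: "\<And>x y x' y'. x\<in>Q \<Longrightarrow> y\<in>Q \<Longrightarrow> x'\<in>Q \<Longrightarrow> y'\<in>Q \<Longrightarrow> x<y \<Longrightarrow> x'<y' \<Longrightarrow>
      adj_ordered (x,y) (x',y') \<Longrightarrow> {(x,y),(x',y')} \<noteq> e \<Longrightarrow> sp (x,y) \<noteq> sp (x',y')"
    and lab: "\<And>x y. x\<in>Q \<Longrightarrow> y\<in>Q \<Longrightarrow> sp (x,y) \<in> Q"
    and adj: "adj_ordered (x,y) (x',y')" and ne: "{(x,y),(x',y')} \<noteq> e" and lt: "x<y" "x'<y'"
  shows "star_col Q sp (x,y) \<noteq> star_col Q sp (x',y')"
proof -
  have d: "x \<noteq> x'" "x \<noteq> y'" "y \<noteq> x'" "y \<noteq> y'" using adj by (auto simp: adj_ordered_def)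
  show ?thesis
    using d lab[of x y] lab[of x' y'] inner[OF _ _ _ _ lt adj ne]
    unfolding star_col_def by auto
qed

lemma card3: "c \<noteq> b \<Longrightarrow> c \<noteq> d \<Longrightarrow> b \<noteq> d \<Longrightarrow> {c,b,d} \<subseteq> {1..n} \<Longrightarrow> card ({1..n} - {c,b,d}) = n - 3"
  by (simp add: card_Diff_subset)

lemma star_img:
  assumes "stable n v" "R \<subseteq> Q" "\<And>x y. sp (x,y) \<in> {1..n} - R"
  shows "star_col Q sp v \<in> {1..n} - R"
proof -
  obtain x y where v: "v = (x,y)" by (cases v)
  have "1 \<le> x" "x < y" "y \<le> n" using assms(1) v by (auto simp: stable_def)
  then show ?thesis using assms(2,3) unfolding v star_col_def by auto
qed

lemma star_colourable:
  assumes R: "R \<subseteq> Q" "card ({1..n} - R) \<le> k"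
    and labs: "\<And>x y. sp (x,y) \<in> {1..n} - R"
    and labQ: "\<And>x y. sp (x,y) \<in> Q"
    and inner: "\<And>x y x' y'. x\<in>Q \<Longrightarrow> y\<in>Q \<Longrightarrow> x'\<in>Q \<Longrightarrow> y'\<in>Q \<Longrightarrow> x<y \<Longrightarrow> x'<y' \<Longrightarrow>
      adj_ordered (x,y) (x',y') \<Longrightarrow> {(x,y),(x',y')} \<noteq> e \<Longrightarrow> sp (x,y) \<noteq> sp (x',y')"
  shows "colourable (delete_edge (G n) e) k"
proof (rule colourable_del[where col = "star_col Q sp" and S = "{1..n} - R"])
  fix v assume "stable n v"
  then show "star_col Q sp v \<in> {1..n} - R" using star_img R(1) labs by blast
next
  show "finite ({1..n} - R)" by simp
next
  show "card ({1..n} - R) \<le> k" by (rule R(2))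
next
  fix u v assume su: "stable n u" and sv: "stable n v" and ad: "adj_ordered u v" and ne: "{u,v} \<noteq> e"
  obtain x y where u: "u = (x,y)" by (cases u)
  obtain x' y' where v: "v = (x',y')" by (cases v)
  have lt: "x<y" "x'<y'" using su sv u v by (auto simp: stable_def)
  have l: "\<And>x y. x\<in>Q \<Longrightarrow> y\<in>Q \<Longrightarrow> sp (x,y) \<in> Q" using labQ by blast
  have a1: "adj_ordered (x,y) (x',y')" and a2: "{(x,y),(x',y')} \<noteq> e" using ad ne u v by auto
  show "star_col Q sp u \<noteq> star_col Q sp v"
    unfolding u v
    by (rule star_ok[where Q=Q and sp=sp and e=e, OF inner l a1 a2 lt])
qed

lemma PL5: "a<c \<Longrightarrow> c<b \<Longrightarrow> b<d \<Longrightarrow> 1 \<le> (a::nat) \<Longrightarrow> x \<in> {1,a,c,b,d} \<Longrightarrow> y \<in> {1,a,c,b,d} \<Longrightarrow> x < y \<Longrightarrow>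
   (x,y) \<in> {(1,a),(1,c),(1,b),(1,d),(a,c),(a,b),(a,d),(c,b),(c,d),(b,d)}"
  apply (simp only: insert_iff empty_iff)
  apply (elim disjE)
  apply simp_all
  done

lemma chk5: "a<c \<Longrightarrow> c<b \<Longrightarrow> b<d \<Longrightarrow> 1 \<le> (a::nat) \<Longrightarrow> u \<in> {(1,a),(1,c),(1,b),(1,d),(a,c),(a,b),(a,d),(c,b),(c,d),(b,d)} \<Longrightarrow>
      v \<in> {(1,a),(1,c),(1,b),(1,d),(a,c),(a,b),(a,d),(c,b),(c,d),(b,d)} \<Longrightarrow>
      adj_ordered u v \<Longrightarrow> {u,v} \<noteq> {(a,b),(c,d)} \<Longrightarrow> (if u \<in> {(a,b),(a,d),(c,d)} then a else (1::nat)) \<noteq> (if v \<in> {(a,b),(a,d),(c,d)} then a else (1::nat))"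
  apply (simp only: insert_iff empty_iff)
  apply (elim disjE)
  apply (simp_all add: adj_ordered_def)
  apply (cases "a = 1"; simp)
  done

lemma crit_cross:
  assumes s1: "stable n (a,b)" and s2: "stable n (c,d)" and o: "a<c" "c<b" "b<d"
  shows "colourable (delete_edge (G n) {(a,b),(c,d)}) (n-3)"
proof -
  have a1: "1 \<le> a" and dn: "d \<le> n" using s1 s2 by (auto simp: stable_def)
  show ?thesis
  proof (rule star_colourable[where Q = "{1,a,c,b,d}" and R = "{c,b,d}"
        and sp = "\<lambda>u. if u \<in> {(a,b),(a,d),(c,d)} then a else (1::nat)"])
    show "{c,b,d} \<subseteq> {1,a,c,b,d}" by auto
    show "card ({1..n} - {c,b,d}) \<le> n - 3" using card3[of c b d n] o a1 dn by simp
    show "\<And>x y. (if (x,y) \<in> {(a,b),(a,d),(c,d)} then a else 1) \<in> {1..n} - {c,b,d}"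
      using o a1 dn by auto
    show "\<And>x y. (if (x,y) \<in> {(a,b),(a,d),(c,d)} then a else 1) \<in> {1,a,c,b,d}" by auto
    show "(if (x,y) \<in> {(a,b),(a,d),(c,d)} then a else 1) \<noteq> (if (x',y') \<in> {(a,b),(a,d),(c,d)} then a else 1)"
      if "x \<in> {1,a,c,b,d}" "y \<in> {1,a,c,b,d}" "x' \<in> {1,a,c,b,d}" "y' \<in> {1,a,c,b,d}" "x < y" "x' < y'"
        "adj_ordered (x,y) (x',y')" "{(x,y),(x',y')} \<noteq> {(a,b),(c,d)}" for x y x' y'
      by (rule chk5[OF o a1 PL5[OF o a1 that(1,2,5)] PL5[OF o a1 that(3,4,6)] that(7,8)])
  qed
qed

lemma PL6: "1<a \<Longrightarrow> a<c \<Longrightarrow> c<m \<Longrightarrow> m<d \<Longrightarrow> d<(b::nat) \<Longrightarrow> x \<in> {1,a,c,m,d,b} \<Longrightarrow> y \<in> {1,a,c,m,d,b} \<Longrightarrow> x < y \<Longrightarrow>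
   (x,y) \<in> {(1,a),(1,c),(1,m),(1,d),(1,b),(a,c),(a,m),(a,d),(a,b),(c,m),(c,d),(c,b),(m,d),(m,b),(d,b)}"
  apply (simp only: insert_iff empty_iff)
  apply (elim disjE)
  apply simp_all
  done

definition sp6 :: "nat \<Rightarrow> nat \<Rightarrow> nat \<Rightarrow> nat \<Rightarrow> nat \<Rightarrow> nat \<times> nat \<Rightarrow> nat" where
  "sp6 a c m d b u = (if u \<in> {(c,b),(1,c),(m,b),(c,m)} then c
      else if u \<in> {(1,m),(1,d),(a,m),(m,d)} then 1 else a)"

lemma chk6: "1<a \<Longrightarrow> a<c \<Longrightarrow> c<m \<Longrightarrow> m<d \<Longrightarrow> d<(b::nat) \<Longrightarrow>
      u \<in> {(1,a),(1,c),(1,m),(1,d),(1,b),(a,c),(a,m),(a,d),(a,b),(c,m),(c,d),(c,b),(m,d),(m,b),(d,b)} \<Longrightarrow>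
      v \<in> {(1,a),(1,c),(1,m),(1,d),(1,b),(a,c),(a,m),(a,d),(a,b),(c,m),(c,d),(c,b),(m,d),(m,b),(d,b)} \<Longrightarrow>
      adj_ordered u v \<Longrightarrow> {u,v} \<noteq> {(a,b),(c,d)} \<Longrightarrow> sp6 a c m d b u \<noteq> sp6 a c m d b v"
  apply (simp only: insert_iff empty_iff)
  apply (elim disjE)
  apply (simp_all add: adj_ordered_def sp6_def)
  done

lemma crit_trans:
  assumes s1: "stable n (a,b)" and s2: "stable n (c,d)" and o: "1<a" "a<c" "c<d" "d<b"
  shows "colourable (delete_edge (G n) {(a,b),(c,d)}) (n-3)"
proof -
  have bn: "b \<le> n" and cd: "c+1 < d" using s1 s2 o by (auto simp: stable_def)
  define m where "m = c + 1"
  have o2: "1<a" "a<c" "c<m" "m<d" "d<b" using o cd by (auto simp: m_def)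
  show ?thesis
  proof (rule star_colourable[where Q = "{1,a,c,m,d,b}" and R = "{m,d,b}" and sp = "sp6 a c m d b"])
    show "{m,d,b} \<subseteq> {1,a,c,m,d,b}" by auto
    show "card ({1..n} - {m,d,b}) \<le> n - 3" using card3[of m d b n] o2 bn by simp
    show "\<And>x y. sp6 a c m d b (x,y) \<in> {1..n} - {m,d,b}"
      using o2 bn by (auto simp: sp6_def)
    show "\<And>x y. sp6 a c m d b (x,y) \<in> {1,a,c,m,d,b}" by (auto simp: sp6_def)
    show "sp6 a c m d b (x,y) \<noteq> sp6 a c m d b (x',y')"
      if "x \<in> {1,a,c,m,d,b}" "y \<in> {1,a,c,m,d,b}" "x' \<in> {1,a,c,m,d,b}" "y' \<in> {1,a,c,m,d,b}" "x < y" "x' < y'"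
        "adj_ordered (x,y) (x',y')" "{(x,y),(x',y')} \<noteq> {(a,b),(c,d)}" for x y x' y'
      by (rule chk6[OF o2 PL6[OF o2 that(1,2,5)] PL6[OF o2 that(3,4,6)] that(7,8)])
  qed
qed

theorem theorem1:
  fixes n :: nat
  assumes "n \<ge> 4"
  shows "chromatic_number (G n) = n - 2 \<and>
         (\<forall>e\<in>edges (G n). chromatic_number (delete_edge (G n) e) < chromatic_number (G n))"
proof -
  have chi: "chromatic_number (G n) = n - 2"
    unfolding chromatic_number_def
  proof (rule Least_equality)
    show "colourable (G n) (n - 2)" by (rule upper)
    show "\<And>y. colourable (G n) y \<Longrightarrow> n - 2 \<le> y" using lower assms by blast
  qed
  have crit: "chromatic_number (delete_edge (G n) e) < n - 2" if e: "e \<in> edges (G n)" for e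
  proof -
    obtain p q where pq: "e = {p,q}" "stable n p" "stable n q" "adj_ordered p q"
      using e unfolding E_G by blast
    obtain a b where p: "p = (a,b)" by (cases p)
    obtain c d where q: "q = (c,d)" by (cases q)
    have ad: "a < c \<and> ((c < b \<and> b < d) \<or> (1 < a \<and> c < d \<and> d < b))"
      using pq(4) p q by (auto simp: adj_ordered_def)
    have "colourable (delete_edge (G n) e) (n-3)"
      using ad crit_cross[of n a b c d] crit_trans[of n a b c d] pq p q by blast
    then have "chromatic_number (delete_edge (G n) e) \<le> n - 3"
      unfolding chromatic_number_def by (rule Least_le)
    then show ?thesis using assms by linarith
  qed
  show ?thesis using chi crit by simp
qed

end
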